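(* Let $N\ge3$ and let $K=[-1/N,1/N]\times[-N,N]\subseteq\mathbb R^2$ and $T=[-N,N]\times[-1/N,1/N]\subseteq\mathbb R^2$. Then \[ \gamma_2(\mathrm{conv}\{K\cup T\})\,\gamma_2(K\cap T)<\gamma_2(K)\,\gamma_2(T). \]
   Context: $\gamma_2$ denotes the standard Gaussian probability measure on $\mathbb R^2$, with density proportional to $e^{-\|x\|^2/2}$. $\mathrm{conv}\{S\}$ is the convex hull of $S$. *)

theory Defs
  imports "HOL-Analysis.Analysis"
begin

definition gauss2 :: "(real^2) measure" where
  "gauss2 = density lborel (\<lambda>x. ennreal (exp (- (norm x)\<^sup>2 / 2) / (2 * pi)))"

definition gamma2 :: "(real^2) set \<Rightarrow> real" where
  "gamma2 A = measure gauss2 A"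

definition rect :: "real \<Rightarrow> real \<Rightarrow> real \<Rightarrow> real \<Rightarrow> (real^2) set" where
  "rect a b c d = {x. a \<le> x$1 \<and> x$1 \<le> b \<and> c \<le> x$2 \<and> x$2 \<le> d}"

end

theory Submission
  imports Defs
begin
lemma Basis2: "(Basis :: (real^2) set) = {axis 1 1, axis 2 1}"
  by (auto simp: Basis_vec_def UNIV_2)
lemma ax12: "axis 1 (1::real) \<noteq> (axis 2 1 :: real^2)"
  by (simp add: axis_eq_axis)
lemma norm2: "(norm (x::real^2))\<^sup>2 = (x$1)\<^sup>2 + (x$2)\<^sup>2"
  unfolding power2_norm_eq_inner inner_vec_def UNIV_2 by (simp add: power2_eq_square)

definition phi :: "real \<Rightarrow> real" where "phi t = exp (- t\<^sup>2 / 2) / sqrt (2 * pi)"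
definition F :: "real \<Rightarrow> real \<Rightarrow> ennreal" where
  "F a b = (\<integral>\<^sup>+t. ennreal (phi t * indicator {a..b} t) \<partial>lborel)"

lemma phi_pos: "phi t > 0" unfolding phi_def by simp
lemma phi_nonneg: "phi t \<ge> 0" using phi_pos[of t] by simp

lemma phi_meas[measurable]: "phi \<in> borel_measurable borel"
  unfolding phi_def by measurable

lemma closed_rect: "closed (rect a b c d)"
  unfolding rect_def by (intro closed_Collect_conj closed_Collect_le continuous_intros)

lemma phi_mult: "exp (- (norm (x::real^2))\<^sup>2 / 2) / (2 * pi) = phi (x$1) * phi (x$2)"
proof -
  have "sqrt (2*pi) * sqrt (2*pi) = 2 * pi" by simp
  moreover have "exp (- ((x$1)\<^sup>2 + (x$2)\<^sup>2) / 2) = exp (- (x$1)\<^sup>2 / 2) * exp (- (x$2)\<^sup>2 / 2)"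
    by (simp add: exp_add[symmetric] field_simps)
  ultimately show ?thesis unfolding norm2 phi_def by (simp add: field_simps)
qed

lemma emeasure_rect: "emeasure gauss2 (rect a1 b1 a2 b2) = F a1 b1 * F a2 b2"
proof -
  define f :: "real^2 \<Rightarrow> real \<Rightarrow> ennreal" where
    "f = (\<lambda>e t. ennreal (phi t * indicator (if e = axis 1 1 then {a1..b1} else {a2..b2}) t))"
  have m: "rect a1 b1 a2 b2 \<in> sets borel" using closed_rect by (rule borel_closed)
  have "emeasure gauss2 (rect a1 b1 a2 b2) =
     (\<integral>\<^sup>+x. ennreal (exp (- (norm x)\<^sup>2 / 2) / (2 * pi)) * indicator (rect a1 b1 a2 b2) x \<partial>lborel)"
    unfolding gauss2_def using m by (subst emeasure_density) auto
  also have "\<dots> = (\<integral>\<^sup>+x. (\<Prod>e\<in>Basis. f e (x \<bullet> e)) \<partial>lborel)"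
  proof (rule nn_integral_cong)
    fix x :: "real^2"
    show "ennreal (exp (- (norm x)\<^sup>2 / 2) / (2 * pi)) * indicator (rect a1 b1 a2 b2) x =
        (\<Prod>e\<in>Basis. f e (x \<bullet> e))"
      unfolding Basis2 f_def phi_mult using ax12
      by (simp add: inner_axis rect_def indicator_def ennreal_mult phi_nonneg)
  qed
  also have "\<dots> = (\<Prod>e\<in>Basis. (\<integral>\<^sup>+t. f e t \<partial>lborel))"
    by (rule nn_integral_lborel_prod) (auto simp: f_def phi_nonneg)
  also have "\<dots> = F a1 b1 * F a2 b2"
    unfolding Basis2 f_def F_def using ax12 by simp
  finally show ?thesis .
qed

lemma F_fin: "a \<le> b \<Longrightarrow> F a b < top"
proof -
  assume ab: "a \<le> b"
  have "F a b \<le> (\<integral>\<^sup>+t. ennreal 1 * indicator {a..b} t \<partial>lborel)"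
    unfolding F_def
  proof (rule nn_integral_mono)
    fix t
    have "phi t \<le> 1"
    proof -
      have "exp (- t\<^sup>2 / 2) \<le> 1" by simp
      moreover have "1 \<le> sqrt (2 * pi)" using pi_gt3 by (simp add: real_le_rsqrt)
      ultimately have "exp (- t\<^sup>2 / 2) \<le> sqrt (2 * pi)" by linarith
      then show ?thesis unfolding phi_def by (simp add: divide_le_eq)
    qed
    then show "ennreal (phi t * indicator {a..b} t) \<le> ennreal 1 * indicator {a..b} t"
      by (simp add: indicator_def)
  qed
  also have "\<dots> = ennreal (b - a)" using ab by (subst nn_integral_cmult_indicator) auto
  finally show ?thesis using ennreal_less_top le_less_trans by blast
qed

lemma F_pos: "a < b \<Longrightarrow> 0 < F a b"
proof -
  assume ab: "a < b"
  define c where "c = exp (- (\<bar>a\<bar> + \<bar>b\<bar>)\<^sup>2 / 2) / sqrt (2 * pi)"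
  have c0: "c > 0" unfolding c_def by simp
  have "(\<integral>\<^sup>+t. ennreal c * indicator {a..b} t \<partial>lborel) \<le> F a b"
    unfolding F_def
  proof (rule nn_integral_mono)
    fix t
    show "ennreal c * indicator {a..b} t \<le> ennreal (phi t * indicator {a..b} t)"
    proof (cases "t \<in> {a..b}")
      case True
      then have "\<bar>t\<bar> \<le> \<bar>a\<bar> + \<bar>b\<bar>" by auto
      then have "t\<^sup>2 \<le> (\<bar>a\<bar> + \<bar>b\<bar>)\<^sup>2"
        by (metis abs_ge_zero abs_le_square_iff abs_of_nonneg add_nonneg_nonneg)
      then have "c \<le> phi t" unfolding c_def phi_def
        by (intro divide_right_mono) auto
      then show ?thesis using True by (simp add: indicator_def ennreal_leI)
    qed (auto simp: indicator_def)
  qed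
  moreover have "(\<integral>\<^sup>+t. ennreal c * indicator {a..b} t \<partial>lborel) = ennreal c * ennreal (b - a)"
    using ab by (subst nn_integral_cmult_indicator) auto
  moreover have "ennreal c * ennreal (b - a) > 0" using c0 ab
    by (simp add: ennreal_mult[symmetric])
  ultimately show ?thesis by (metis less_le_trans)
qed

lemma P_pos: "a < b \<Longrightarrow> 0 < enn2real (F a b)"
  using F_pos F_fin by (simp add: enn2real_positive_iff)

lemma gamma_rect: "gamma2 (rect a1 b1 a2 b2) = enn2real (F a1 b1) * enn2real (F a2 b2)"
  unfolding gamma2_def measure_def emeasure_rect by (simp add: enn2real_mult)

lemma convex_lin: "convex {x::real^2. p * x$1 + q * x$2 \<le> r}"
  unfolding convex_def
proof (clarify)
  fix x y :: "real^2" and u v :: real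
  assume h: "p * x$1 + q * x$2 \<le> r" "p * y$1 + q * y$2 \<le> r" "0 \<le> u" "0 \<le> v" "u + v = 1"
  have "p * (u *\<^sub>R x + v *\<^sub>R y) $ 1 + q * (u *\<^sub>R x + v *\<^sub>R y) $ 2
     = u * (p * x$1 + q * x$2) + v * (p * y$1 + q * y$2)" by (simp add: algebra_simps)
  also have "\<dots> \<le> u * r + v * r"
    using h by (intro add_mono mult_left_mono) auto
  also have "\<dots> = r" using h(5) by (metis distrib_right mult_1 mult.commute)
  finally show "p * (u *\<^sub>R x + v *\<^sub>R y) $ 1 + q * (u *\<^sub>R x + v *\<^sub>R y) $ 2 \<le> r" .
qed

definition H :: "real \<Rightarrow> real \<Rightarrow> real \<Rightarrow> (real^2) set" where
  "H p q r = {x. p * x$1 + q * x$2 \<le> r}"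

theorem mainTheorem8:
  fixes N :: real
  assumes "N \<ge> 3"
  defines "K \<equiv> rect (-1/N) (1/N) (-N) N"
      and "T \<equiv> rect (-N) N (-1/N) (1/N)"
  shows "gamma2 (convex hull (K \<union> T)) * gamma2 (K \<inter> T) < gamma2 K * gamma2 T"
proof -
  define e where "e = 1 / N"
  have N0: "N > 0" using assms(1) by simp
  have e0: "0 < e" using N0 by (simp add: e_def)
  have e3: "e \<le> 1/3" unfolding e_def using assms(1) by (simp add: divide_le_eq)
  have Kd: "K = rect (-e) e (-N) N" by (simp add: K_def e_def)
  have Td: "T = rect (-N) N (-e) e" by (simp add: T_def e_def)
  have KT: "K \<inter> T = rect (-e) e (-e) e" unfolding Kd Td rect_def using e3 assms(1) by auto
  define a where "a = enn2real (F (-e) e)"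
  define p where "p = enn2real (F (-N) N)"
  define r where "r = enn2real (F (N - 1/2) N)"
  have a0: "a > 0" unfolding a_def using e0 by (intro P_pos) simp
  have r0: "r > 0" unfolding r_def by (intro P_pos) simp
  define S where "S = rect (-N) N (-N) N"
  define R where "R = rect (N - 1/2) N (N - 1/2) N"
  define C where "C = H 1 0 N \<inter> H (-1) 0 N \<inter> H 0 1 N \<inter> H 0 (-1) N \<inter> H 1 1 (N+e)
     \<inter> H 1 (-1) (N+e) \<inter> H (-1) 1 (N+e) \<inter> H (-1) (-1) (N+e)"
  have Cc: "convex C" unfolding C_def H_def by (intro convex_Int convex_lin)
  have KTC: "K \<union> T \<subseteq> C" unfolding C_def H_def Kd Td rect_def using e3 assms(1) by auto
  have CSR: "C \<subseteq> S - R" unfolding C_def H_def S_def R_def rect_def using e3 assms(1) by auto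
  have conv: "convex hull (K \<union> T) \<subseteq> S - R"
    using hull_minimal[OF KTC, of convex] Cc CSR by blast
  have mS: "S \<in> sets gauss2" "R \<in> sets gauss2" unfolding S_def R_def gauss2_def
    using closed_rect by (auto intro: borel_closed)
  have finS: "emeasure gauss2 S < top" unfolding S_def emeasure_rect
    using F_fin[of "-N" N] N0 by (simp add: ennreal_mult_less_top)
  have RS: "R \<subseteq> S" unfolding R_def S_def rect_def using assms(1) by auto
  have "gamma2 (convex hull (K \<union> T)) \<le> gamma2 (S - R)"
    unfolding gamma2_def measure_def
  proof (rule enn2real_mono)
    show "emeasure gauss2 (convex hull (K \<union> T)) \<le> emeasure gauss2 (S - R)"
      using conv mS by (intro emeasure_mono) auto
    have "emeasure gauss2 (S - R) \<le> emeasure gauss2 S" using mS by (intro emeasure_mono) auto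
    then show "emeasure gauss2 (S - R) < top" using finS by (meson le_less_trans)
  qed
  also have "\<dots> = gamma2 S - gamma2 R" unfolding gamma2_def
    using finS mS RS by (intro measure_Diff) auto
  also have "\<dots> = p * p - r * r" unfolding S_def R_def gamma_rect p_def r_def ..
  finally have c1: "gamma2 (convex hull (K \<union> T)) < p * p" using r0
    by (smt (verit) mult_pos_pos)
  have "gamma2 (convex hull (K \<union> T)) * gamma2 (K \<inter> T) = gamma2 (convex hull (K \<union> T)) * (a * a)"
    unfolding KT gamma_rect a_def ..
  also have "\<dots> < (p * p) * (a * a)" using c1 a0 by (intro mult_strict_right_mono) auto
  also have "\<dots> = gamma2 K * gamma2 T" unfolding Kd Td gamma_rect a_def p_def by simp
  finally show ?thesis .
qed

end
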